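(* For all integers $n\ge 28$, \[ C(n) \le \frac12\log\!\left(\frac{n\pi}{2e}\right) + r_{\rm UB}(n),\qquad r_{\rm UB}(n) := -\log\!\left(1-2\left(\frac{2e}{n\pi}\right)^{1/4}\right)+\frac{10}{\log\frac{n\pi}{2e}}. \]
   Context: All logarithms are natural. For an integer $n\ge1$, the binomial channel has input $X\in[0,1]$, output $Y\in\{0,\dots,n\}$ and transition law $P_{Y|X}(y|x)=\binom{n}{y}x^y(1-x)^{n-y}$. Its capacity is $C(n)=\max_{P_X} I(X;Y)$, the maximum taken over all probability distributions $P_X$ on $[0,1]$. *)

theory Defs
  imports "HOL-Probability.Probability"
begin

definition binom_W :: "nat \<Rightarrow> real \<Rightarrow> nat \<Rightarrow> real" where
  "binom_W n x y = real (n choose y) * x ^ y * (1 - x) ^ (n - y)"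

definition binom_out :: "nat \<Rightarrow> real measure \<Rightarrow> nat \<Rightarrow> real" where
  "binom_out n M y = (\<integral>x. binom_W n x y \<partial>M)"

definition binom_MI :: "nat \<Rightarrow> real measure \<Rightarrow> real" where
  "binom_MI n M = (\<integral>x. (\<Sum>y\<le>n. if binom_W n x y = 0 then 0
        else binom_W n x y * ln (binom_W n x y / binom_out n M y)) \<partial>M)"

definition input_dists :: "real measure set" where
  "input_dists = {M. prob_space M \<and> sets M = sets (restrict_space borel {0..1::real})}"

definition binom_capacity :: "nat \<Rightarrow> real" where
  "binom_capacity n = Sup (binom_MI n ` input_dists)"

definition r_UB :: "nat \<Rightarrow> real" where
  "r_UB n = - ln (1 - 2 * ((2 * exp 1) / (real n * pi)) powr (1/4))
            + 10 / ln (real n * pi / (2 * exp 1))"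

end

theory Submission
  imports Defs
begin

lemma ln_lower_aux:
  fixes z :: real assumes "z \<ge> 0"
  shows "2*z/(2+z) \<le> ln (1+z)"
proof -
  let ?f = "\<lambda>z::real. ln (1+z) - 2*z/(2+z)"
  have "?f 0 \<le> ?f z"
  proof (rule DERIV_nonneg_imp_nondecreasing[OF assms])
    fix x :: real assume x: "0 \<le> x" "x \<le> z"
    have p1: "1+x \<noteq> 0" "2+x \<noteq> 0" "(1+x)*(2+x)^2 \<noteq> 0" "(1+x)^2 \<noteq> 0" using x by auto
    have "DERIV ?f x :> (1/(1+x) - 4/(2+x)^2)"
      using x by (auto intro!: derivative_eq_intros simp: field_simps power2_eq_square)
    moreover have "1/(1+x) - 4/(2+x)^2 = x^2/((1+x)*(2+x)^2)"
      using x by (simp add: p1 divide_simps power2_eq_square) (simp add: algebra_simps)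
    moreover have "x^2/((1+x)*(2+x)^2) \<ge> 0" using x by simp
    ultimately show "\<exists>y. DERIV ?f x :> y \<and> y \<ge> 0" by metis
  qed
  then show ?thesis by simp
qed

lemma ln_upper_aux:
  fixes z :: real assumes "z \<ge> 0"
  shows "ln (1+z) \<le> z*(2+z)/(2*(1+z))"
proof -
  let ?f = "\<lambda>z::real. z*(2+z)/(2*(1+z)) - ln (1+z)"
  have "?f 0 \<le> ?f z"
  proof (rule DERIV_nonneg_imp_nondecreasing[OF assms])
    fix x :: real assume x: "0 \<le> x" "x \<le> z"
    have p1: "1+x \<noteq> 0" "2+x \<noteq> 0" "(1+x)*(2+x)^2 \<noteq> 0" "(1+x)^2 \<noteq> 0" using x by auto
    have "DERIV ?f x :> (((2+2*x)*(2*(1+x)) - x*(2+x)*2)/(2*(1+x))^2 - 1/(1+x))"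
      using x by (auto intro!: derivative_eq_intros simp: field_simps power2_eq_square)
    moreover have "((2+2*x)*(2*(1+x)) - x*(2+x)*2)/(2*(1+x))^2 - 1/(1+x) = x^2/(2*(1+x)^2)"
      using x by (simp add: p1 divide_simps power2_eq_square) (simp add: algebra_simps)
    moreover have "x^2/(2*(1+x)^2) \<ge> 0" using x by simp
    ultimately show "\<exists>y. DERIV ?f x :> y \<and> y \<ge> 0" by metis
  qed
  then show ?thesis by simp
qed

definition st :: "nat \<Rightarrow> real" where
  "st m = ln (fact m) - (real m + 1/2) * ln (real m) + real m"

lemma st_diff:
  assumes "m \<ge> 1"
  shows "st m - st (Suc m) = (real m + 1/2) * ln (1 + 1/real m) - 1"
proof -
  have m: "real m > 0" using assms by simp
  have h1: "ln (fact (Suc m) :: real) = ln (real m + 1) + ln (fact m)"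
  proof -
    have "(fact (Suc m) :: real) = (real m + 1) * fact m" by simp
    then show ?thesis by (simp add: ln_mult)
  qed
  moreover have "ln (1 + 1/real m) = ln (real m + 1) - ln (real m)"
  proof -
    have "1 + 1/real m = (real m + 1)/real m" using m by (simp add: field_simps)
    then show ?thesis using m by (simp add: ln_div)
  qed
  ultimately show ?thesis unfolding st_def
    by (simp only: of_nat_Suc h1) (simp add: algebra_simps)
qed

lemma st_decr:
  assumes "m \<ge> 1" shows "st (Suc m) \<le> st m"
proof -
  have m: "real m > 0" using assms by simp
  have "2*(1/real m)/(2+1/real m) \<le> ln (1 + 1/real m)"
    by (rule ln_lower_aux) simp
  moreover have "2*(1/real m)/(2+1/real m) = 1/(real m + 1/2)"
    using m by (simp add: field_simps)
  ultimately have "1 \<le> (real m + 1/2) * ln (1 + 1/real m)"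
    using m by (simp add: field_simps)
  with st_diff[OF assms] show ?thesis by simp
qed

lemma st_lower_step:
  assumes "m \<ge> 1" shows "st m - st (Suc m) \<le> 1/(2*real m) - 1/(2*real (Suc m))"
proof -
  have m: "real m > 0" using assms by simp
  have mz: "real m \<noteq> 0" "real m + 1 \<noteq> 0" using m by auto
  have "ln (1 + 1/real m) \<le> (1/real m)*(2+1/real m)/(2*(1+1/real m))"
    by (rule ln_upper_aux) simp
  hence "(real m + 1/2) * ln (1 + 1/real m) \<le> (real m + 1/2) * ((1/real m)*(2+1/real m)/(2*(1+1/real m)))"
    using m by (intro mult_left_mono) auto
  also have "\<dots> = 1 + 1/(4*real m*(real m+1))"
  proof -
    have e1: "(1/real m)*(2+1/real m)/(2*(1+1/real m)) = (2*real m+1)/(2*real m*(real m+1))"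
    proof -
      have a: "2+1/real m = (2*real m+1)/real m" "1+1/real m = (real m+1)/real m"
        using mz by (simp_all add: field_simps)
      show ?thesis using m by (simp add: divide_simps)
    qed
    have e2: "(real m + 1/2) * ((2*real m+1)/(2*real m*(real m+1))) = (2*real m+1)^2/(4*real m*(real m+1))"
      using m by (simp add: field_simps power2_eq_square)
    have e3: "(2*real m+1)^2/(4*real m*(real m+1)) = 1 + 1/(4*real m*(real m+1))"
      using m by (simp add: divide_simps power2_eq_square) (simp add: algebra_simps)
    show ?thesis using e1 e2 e3 by simp
  qed
  also have "\<dots> \<le> 1 + (1/(2*real m) - 1/(2*real (Suc m)))"
  proof -
    have "1/(2*real m) - 1/(2*real (Suc m)) = 1/(2*real m*(real m+1))"
      using m by (simp add: divide_simps)
    moreover have "1/(4*real m*(real m+1)) \<le> 1/(2*real m*(real m+1))"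
      using m by (intro divide_left_mono) (auto simp: mult_pos_pos)
    ultimately show ?thesis by simp
  qed
  finally show ?thesis using st_diff[OF assms] by simp
qed

lemma st_lower: "m \<ge> 1 \<Longrightarrow> st m \<ge> 1/2 + 1/(2*real m)"
proof (induction m rule: dec_induct)
  case base
  then show ?case by (simp add: st_def)
next
  case (step m)
  then show ?case using st_lower_step[of m] by simp
qed

lemma st_mono: "m \<le> k \<Longrightarrow> 1 \<le> m \<Longrightarrow> st k \<le> st m"
proof (induction k rule: dec_induct)
  case base then show ?case by simp
next
  case (step k) then show ?case using st_decr[of k] by simp
qed

lemma st_conv: obtains c where "(\<lambda>k. st (Suc k)) \<longlonglongrightarrow> c" "\<And>m. m \<ge> 1 \<Longrightarrow> c \<le> st m"
proof -
  have "decseq (\<lambda>k. st (Suc k))"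
    by (rule decseq_SucI) (simp add: st_decr)
  moreover have "\<forall>i. 1/2 \<le> st (Suc i)"
    using st_lower by (smt (verit) divide_nonneg_nonneg le_add1 of_nat_0_le_iff plus_1_eq_Suc)
  ultimately obtain c where c: "(\<lambda>k. st (Suc k)) \<longlonglongrightarrow> c" "\<forall>i. c \<le> st (Suc i)"
    by (rule decseq_convergent)
  show ?thesis
  proof (rule that[OF c(1)])
    fix m :: nat assume "m \<ge> 1"
    then obtain i where "m = Suc i" by (cases m) auto
    then show "c \<le> st m" using c(2) by simp
  qed
qed

lemma wallis_prod:
  "(\<Prod>k=1..m. (4*real k^2) / (4*real k^2 - 1)) = 16^m * (fact m)^4 / ((fact (2*m))^2 * (2*real m+1))"
proof (induction m)
  case 0 then show ?case by simp
next
  case (Suc m)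
  have f2: "(fact (2 * Suc m) :: real) = (2*real m+2)*(2*real m+1) * fact (2*m)"
    by (simp add: algebra_simps)
  have pos: "(fact (2*m) :: real) > 0" "(2*real m+1) > 0" "2*real m + 3 > 0" by auto
  have "(\<Prod>k=1..Suc m. (4*real k^2) / (4*real k^2 - 1)) =
        (\<Prod>k=1..m. (4*real k^2) / (4*real k^2 - 1)) * ((4*real (Suc m)^2) / (4*real (Suc m)^2 - 1))"
    by simp
  also have "\<dots> = 16^m * (fact m)^4 / ((fact (2*m))^2 * (2*real m+1)) * ((4*(real m+1)^2) / ((2*real m+1)*(2*real m+3)))"
  proof -
    have "4*real (Suc m)^2 - 1 = (2*real m+1)*(2*real m+3)" "4*real (Suc m)^2 = 4*(real m+1)^2"
      by (simp_all add: algebra_simps power2_eq_square)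
    then show ?thesis using Suc.IH by simp
  qed
  also have "\<dots> = 16^(Suc m) * (fact (Suc m))^4 / ((fact (2*Suc m))^2 * (2*real (Suc m)+1))"
  proof -
    have fs: "(fact (Suc m) :: real) = (real m + 1) * fact m" by simp
    define F :: real where "F = fact m"
    define G :: real where "G = fact (2*m)"
    have G: "G > 0" unfolding G_def by simp
    have "16^m * F^4 / (G^2 * (2*real m+1)) * ((4*(real m+1)^2) / ((2*real m+1)*(2*real m+3)))
        = 16^(Suc m) * ((real m + 1)*F)^4 / (((2*real m+2)*(2*real m+1) * G)^2 * (2*real (Suc m)+1))"
      using G pos by (simp add: divide_simps) (simp add: algebra_simps power2_eq_square power4_eq_xxxx)
    then show ?thesis unfolding f2 fs F_def G_def .
  qed
  finally show ?case .
qed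

lemma ln_wallis_eq:
  assumes "m \<ge> 1"
  shows "ln (\<Prod>k=1..m. (4*real k^2) / (4*real k^2 - 1)) =
         4 * st m - 2 * st (2*m) - ln 2 - ln (2 + 1/real m)"
proof -
  have m: "real m > 0" using assms by simp
  define F :: real where "F = fact m"
  define G :: real where "G = fact (2*m)"
  have F: "F > 0" and G: "G > 0" unfolding F_def G_def by auto
  have "ln (16^m * F^4 / (G^2 * (2*real m+1))) = ln (16^m) + ln (F^4) - ln (G^2) - ln (2*real m+1)"
    using F G m by (simp add: ln_mult ln_div)
  also have "\<dots> = real m * (4 * ln 2) + 4 * ln F - 2 * ln G - ln (2*real m+1)"
  proof -
    have "ln (16::real) = 4 * ln 2"
      using ln_realpow[of 2 4] by simp
    then show ?thesis using F G by (simp add: ln_realpow)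
  qed
  finally have A: "ln (16^m * F^4 / (G^2 * (2*real m+1))) = real m * (4 * ln 2) + 4 * ln F - 2 * ln G - ln (2*real m+1)" .
  have lF: "ln F = st m + (real m + 1/2) * ln (real m) - real m" unfolding st_def F_def by simp
  have lG: "ln G = st (2*m) + (2*real m + 1/2) * (ln 2 + ln (real m)) - 2 * real m"
    unfolding st_def G_def using m by (simp add: ln_mult)
  have l2: "ln (2 + 1/real m) = ln (2*real m+1) - ln (real m)"
  proof -
    have "2 + 1/real m = (2*real m+1)/real m" using m by (simp add: divide_simps)
    then show ?thesis using m by (simp add: ln_div)
  qed
  show ?thesis unfolding wallis_prod F_def[symmetric] G_def[symmetric] A lF lG l2
    by (simp add: algebra_simps)
qed

lemma st_ge: assumes "m \<ge> 1" shows "ln (2*pi)/2 \<le> st m"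
proof -
  obtain c where c: "(\<lambda>k. st (Suc k)) \<longlonglongrightarrow> c" "\<And>m. m \<ge> 1 \<Longrightarrow> c \<le> st m"
    using st_conv by blast
  let ?P = "\<lambda>m. (\<Prod>k=1..m. (4*real k^2) / (4*real k^2 - 1))"
  have "(\<lambda>k. ?P (Suc k)) \<longlonglongrightarrow> pi/2"
    using wallis by (rule LIMSEQ_Suc)
  hence L1: "(\<lambda>k. ln (?P (Suc k))) \<longlonglongrightarrow> ln (pi/2)"
    by (rule tendsto_ln) simp
  have c2: "(\<lambda>k. st (2 * Suc k)) \<longlonglongrightarrow> c"
  proof -
    have sm: "strict_mono (\<lambda>k::nat. 2*k+1)" by (rule strict_monoI) simp
    have "((\<lambda>k. st (Suc k)) \<circ> (\<lambda>k. 2*k+1)) \<longlonglongrightarrow> c"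
      by (rule LIMSEQ_subseq_LIMSEQ[OF c(1) sm])
    moreover have "((\<lambda>k. st (Suc k)) \<circ> (\<lambda>k. 2*k+1)) = (\<lambda>k. st (2 * Suc k))"
      by (rule ext) simp
    ultimately show ?thesis by simp
  qed
  have l2: "(\<lambda>k. ln (2 + 1/real (Suc k))) \<longlonglongrightarrow> ln 2"
  proof -
    have "(\<lambda>k. 2 + 1/real (Suc k)) \<longlonglongrightarrow> 2 + 0"
      by (intro tendsto_intros LIMSEQ_Suc[OF lim_inverse_n'])
    then show ?thesis by (intro tendsto_ln) auto
  qed
  have L2: "(\<lambda>k. 4 * st (Suc k) - 2 * st (2 * Suc k) - ln 2 - ln (2 + 1/real (Suc k))) \<longlonglongrightarrow> 4*c - 2*c - ln 2 - ln 2"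
    by (intro tendsto_intros c(1) c2 l2)
  have "(\<lambda>k. ln (?P (Suc k))) = (\<lambda>k. 4 * st (Suc k) - 2 * st (2 * Suc k) - ln 2 - ln (2 + 1/real (Suc k)))"
    by (rule ext, rule ln_wallis_eq) simp
  with L2 have L3: "(\<lambda>k. ln (?P (Suc k))) \<longlonglongrightarrow> 4*c - 2*c - ln 2 - ln 2" by simp
  have "ln (pi/2) = 4*c - 2*c - ln 2 - ln 2"
    by (rule LIMSEQ_unique[OF L1 L3])
  hence "c = ln (2*pi)/2"
    by (simp add: ln_div ln_mult algebra_simps)
  with c(2)[OF assms] show ?thesis by simp
qed

lemma ln_choose_le:
  assumes "1 \<le> y" "y < n"
  shows "ln (real (n choose y)) \<le> - ln (2*pi)/2 + (real n + 1/2) * ln (real n)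
          - (real y + 1/2) * ln (real y) - (real (n-y) + 1/2) * ln (real (n-y))"
proof -
  have "real (n choose y) = fact n / (fact y * fact (n-y))"
    using assms by (simp add: binomial_fact)
  hence "ln (real (n choose y)) = ln (fact n) - ln (fact y) - ln (fact (n-y))"
    by (simp add: ln_div ln_mult)
  moreover have "st n \<le> st y" using assms by (intro st_mono) auto
  moreover have "ln (2*pi)/2 \<le> st (n-y)" using assms by (intro st_ge) auto
  ultimately show ?thesis unfolding st_def using assms by (simp add: algebra_simps)
qed

lemma arcsin_deriv_aux:
  fixes n t :: real assumes "0 < t" "t < n"
  shows "((\<lambda>u. arcsin (2*u/n - 1)) has_real_derivative (1/sqrt (t*(n-t)))) (at t)"
proof -
  have n: "n > 0" using assms by simp
  have u: "-1 < 2*t/n - 1" "2*t/n - 1 < 1" using assms n by (auto simp: field_simps)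
  have D: "((\<lambda>u. arcsin (2*u/n - 1)) has_real_derivative (inverse (sqrt (1 - (2*t/n-1)^2)) * (2/n))) (at t)"
    using u by (auto intro!: derivative_eq_intros)
  have A: "1 - (2*t/n-1)^2 = 4*(t*(n-t))/n^2"
    using n by (simp add: field_simps power2_eq_square)
  have B: "sqrt (4*(t*(n-t))/n^2) = 2 * sqrt (t*(n-t))/n"
    using n by (simp add: real_sqrt_divide real_sqrt_mult)
  have P: "sqrt (t*(n-t)) > 0" using assms by simp
  have eq: "inverse (sqrt (1 - (2*t/n-1)^2)) * (2/n) = 1/sqrt (t*(n-t))"
  proof -
    define S where "S = sqrt (t*(n-t))"
    have S: "S > 0" using P unfolding S_def .
    have "inverse (2 * S/n) * (2/n) = (n/(2*S)) * (2/n)" by (simp add: inverse_eq_divide)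
    also have "\<dots> = 1/S" using S n by (simp add: divide_simps)
    finally show ?thesis unfolding A B S_def[symmetric] .
  qed
  show ?thesis using D unfolding eq .
qed

lemma recip_sqrt_convex_aux:
  fixes n y h :: real assumes "0 \<le> h" "h < y" "y + h < n"
  shows "2 / sqrt (y*(n-y)) \<le> 1/sqrt ((y+h)*(n-(y+h))) + 1/sqrt ((y-h)*(n-(y-h)))"
proof -
  define a where "a = 1/sqrt ((y+h)*(n-(y+h)))"
  define b where "b = 1/sqrt ((y-h)*(n-(y-h)))"
  define c where "c = 1/sqrt (y*(n-y))"
  have pos: "(y+h)*(n-(y+h)) > 0" "(y-h)*(n-(y-h)) > 0" "y*(n-y) > 0" using assms by auto
  have a: "a > 0" and b: "b > 0" and c: "c > 0" unfolding a_def b_def c_def using pos by auto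
  have P: "((y+h)*(n-(y+h))) * ((y-h)*(n-(y-h))) \<le> (y*(n-y))^2"
  proof -
    have "((y+h)*(n-(y+h))) * ((y-h)*(n-(y-h))) = (y^2-h^2)*((n-y)^2-h^2)"
      by (simp add: algebra_simps power2_eq_square)
    also have "\<dots> \<le> y^2 * (n-y)^2"
    proof -
      have "(y^2-h^2)*((n-y)^2-h^2) = y^2*(n-y)^2 - h^2*(y^2 + (n-y)^2 - h^2)"
        by (simp add: algebra_simps power2_eq_square)
      moreover have "h^2*(y^2 + (n-y)^2 - h^2) \<ge> 0"
      proof -
        have "h*h \<le> y*y" using assms by (intro mult_mono) auto
        moreover have "(n-y)*(n-y) \<ge> 0" by simp
        ultimately have "h*h \<le> y*y + (n-y)*(n-y)" by linarith
        then show ?thesis by (intro mult_nonneg_nonneg) (auto simp: power2_eq_square)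
      qed
      ultimately show ?thesis by simp
    qed
    finally show ?thesis by (simp add: power_mult_distrib)
  qed
  have "c^2 \<le> a*b"
  proof -
    have "c^2 = 1/(y*(n-y))" unfolding c_def using pos by (simp add: power_divide)
    also have "\<dots> = 1/ sqrt ((y*(n-y))^2)" using pos by simp
    also have "\<dots> \<le> 1/sqrt (((y+h)*(n-(y+h))) * ((y-h)*(n-(y-h))))"
      using P pos by (intro divide_left_mono real_sqrt_le_mono) (auto intro!: mult_pos_pos)
    also have "\<dots> = a*b" unfolding a_def b_def by (simp add: real_sqrt_mult)
    finally show ?thesis .
  qed
  moreover have "4*(a*b) \<le> (a+b)^2"
    using sum_squares_ge_zero[of "a-b" 0] by (simp add: power2_eq_square algebra_simps)
  ultimately have "(2*c)^2 \<le> (a+b)^2" by (simp add: power_mult_distrib)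
  hence "2*c \<le> a+b" by (rule power2_le_imp_le) (use a b in simp)
  then show ?thesis unfolding a_def b_def c_def by simp
qed

lemma term_le_arcsin_diff:
  fixes n y :: real assumes "1 \<le> y" "y + 1 \<le> n"
  shows "1/sqrt (y*(n-y)) \<le> arcsin (2*(y+1/2)/n - 1) - arcsin (2*(y-1/2)/n - 1)"
proof -
  let ?F = "\<lambda>u. arcsin (2*u/n - 1)"
  define k where "k = 2/sqrt (y*(n-y))"
  let ?g = "\<lambda>h. ?F (y+h) - ?F (y-h) - h * k"
  have "?g 0 \<le> ?g (1/2)"
  proof (rule DERIV_nonneg_imp_nondecreasing[where f="?g"])
    fix h :: real assume h: "0 \<le> h" "h \<le> 1/2"
    have d1: "(?F has_real_derivative (1/sqrt ((y+h)*(n-(y+h))))) (at (y+h))"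
      using h assms by (intro arcsin_deriv_aux) auto
    have d2: "(?F has_real_derivative (1/sqrt ((y-h)*(n-(y-h))))) (at (y-h))"
      using h assms by (intro arcsin_deriv_aux) auto
    have dd1: "((\<lambda>h. y+h) has_real_derivative 1) (at h)" by (auto intro!: derivative_eq_intros)
    have dd2: "((\<lambda>h. y-h) has_real_derivative (-1)) (at h)" by (auto intro!: derivative_eq_intros)
    have e1: "((\<lambda>h. ?F (y+h)) has_real_derivative (1/sqrt ((y+h)*(n-(y+h))) * 1)) (at h)"
      by (rule DERIV_chain2[where f="?F" and g="\<lambda>h. y+h", OF d1 dd1])
    have e2: "((\<lambda>h. ?F (y-h)) has_real_derivative (1/sqrt ((y-h)*(n-(y-h))) * (-1))) (at h)"
      by (rule DERIV_chain2[where f="?F" and g="\<lambda>h. y-h", OF d2 dd2])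
    have e3: "((\<lambda>h. h * k) has_real_derivative k) (at h)" by (auto intro!: derivative_eq_intros)
    have DD: "(?g has_real_derivative (1/sqrt ((y+h)*(n-(y+h))) * 1 - 1/sqrt ((y-h)*(n-(y-h))) * (-1) - k)) (at h)"
      by (rule DERIV_diff[OF DERIV_diff[OF e1 e2] e3])
    have PP: "1/sqrt ((y+h)*(n-(y+h))) * 1 - 1/sqrt ((y-h)*(n-(y-h))) * (-1) - k \<ge> 0"
      using recip_sqrt_convex_aux[of h y n] h assms unfolding k_def by simp
    from DD PP have "(?g has_real_derivative (1/sqrt ((y+h)*(n-(y+h))) * 1 - 1/sqrt ((y-h)*(n-(y-h))) * (-1) - k)) (at h)
        \<and> 1/sqrt ((y+h)*(n-(y+h))) * 1 - 1/sqrt ((y-h)*(n-(y-h))) * (-1) - k \<ge> 0" by (rule conjI)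
    then show "\<exists>d. (?g has_real_derivative d) (at h) \<and> d \<ge> 0" by (rule exI)
  qed simp
  then show ?thesis unfolding k_def by simp
qed

lemma sum_recip_sqrt_le_pi:
  assumes "n \<ge> 2"
  shows "(\<Sum>y=1..n-1. 1/sqrt (real y*(real n - real y))) \<le> pi"
proof -
  define G where "G = (\<lambda>k::nat. arcsin (2*(real k - 1/2)/real n - 1))"
  have "(\<Sum>y=1..n-1. 1/sqrt (real y*(real n - real y))) \<le> (\<Sum>y=1..n-1. G (Suc y) - G y)"
  proof (rule sum_mono)
    fix y assume "y \<in> {1..n-1}"
    hence y: "1 \<le> real y" "real y + 1 \<le> real n" using assms by auto
    have "real (Suc y) - 1/2 = real y + 1/2" by simp
    then show "1/sqrt (real y*(real n - real y)) \<le> G (Suc y) - G y"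
      unfolding G_def using term_le_arcsin_diff[OF y] by (simp add: algebra_simps)
  qed
  also have "\<dots> = G (Suc (n-1)) - G 1"
    using assms by (intro sum_Suc_diff) auto
  also have "\<dots> = G n - G 1" using assms by simp
  also have "\<dots> \<le> pi/2 - (-(pi/2))"
  proof -
    have n: "real n \<ge> 2" using assms by simp
    have "-1 \<le> 2*(real n - 1/2)/real n - 1" "2*(real n - 1/2)/real n - 1 \<le> 1"
         "-1 \<le> 2*(1 - 1/2)/real n - 1" "2*(1 - 1/2)/real n - 1 \<le> 1"
      using n by (auto simp: field_simps)
    then have "G n \<le> pi/2" "-(pi/2) \<le> G 1" unfolding G_def
      using arcsin_ubound arcsin_lbound by auto
    then show ?thesis by simp
  qed
  finally show ?thesis by simp
qed

lemma sum_inv_sq_le: "(\<Sum>k=1..N. 1/(real k)^2) \<le> 2 - 1/real (max N 1)"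
proof (induction N)
  case 0 then show ?case by simp
next
  case (Suc N)
  show ?case
  proof (cases "N = 0")
    case True then show ?thesis by simp
  next
    case False
    hence N: "real N \<ge> 1" by simp
    have "(\<Sum>k=1..Suc N. 1/(real k)^2) = (\<Sum>k=1..N. 1/(real k)^2) + 1/(real N + 1)^2" by simp
    also have "\<dots> \<le> 2 - 1/real N + 1/(real N + 1)^2" using Suc.IH False by simp
    also have "\<dots> \<le> 2 - 1/(real N + 1)"
    proof -
      have "1/(real N + 1)^2 \<le> 1/(real N * (real N + 1))"
        using N by (intro divide_left_mono) (auto simp: power2_eq_square)
      moreover have "1/(real N * (real N + 1)) = 1/real N - 1/(real N + 1)"
        using N by (simp add: divide_simps)
      ultimately show ?thesis by simp
    qed
    finally show ?thesis by (simp add: add.commute)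
  qed
qed

lemma bW_sum1: "(\<Sum>y\<le>n. binom_W n x y) = 1"
  using binomial_ring[of x "1-x" n] by (simp add: binom_W_def)

lemma bW_fact_moment:
  assumes "k \<le> n"
  shows "(\<Sum>y\<le>n. real (y choose k) * binom_W n x y) = real (n choose k) * x ^ k"
proof -
  have "(\<Sum>y\<le>n. real (y choose k) * binom_W n x y) = (\<Sum>y=k..n. real (y choose k) * binom_W n x y)"
  proof (rule sum.mono_neutral_right)
    show "{k..n} \<subseteq> {..n}" by auto
    show "\<forall>i\<in>{..n} - {k..n}. real (i choose k) * binom_W n x i = 0" by auto
  qed auto
  also have "\<dots> = (\<Sum>y=k..n. real (n choose k) * x^k * (real ((n-k) choose (y-k)) * x^(y-k) * (1-x)^((n-k)-(y-k))))"
  proof (rule sum.cong[OF refl])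
    fix y assume y: "y \<in> {k..n}"
    have "real (n choose y) * real (y choose k) = real (n choose k) * real ((n-k) choose (y-k))"
      using choose_mult[of k y n] y by (simp flip: of_nat_mult)
    moreover have "x^y = x^k * x^(y-k)" using y by (simp flip: power_add)
    moreover have "n - y = (n-k)-(y-k)" using y by simp
    ultimately show "real (y choose k) * binom_W n x y = real (n choose k) * x^k * (real ((n-k) choose (y-k)) * x^(y-k) * (1-x)^((n-k)-(y-k)))"
      unfolding binom_W_def by (simp add: algebra_simps)
  qed
  also have "\<dots> = real (n choose k) * x^k * (\<Sum>y=k..n. real ((n-k) choose (y-k)) * x^(y-k) * (1-x)^((n-k)-(y-k)))"
    by (simp add: sum_distrib_left)
  also have "(\<Sum>y=k..n. real ((n-k) choose (y-k)) * x^(y-k) * (1-x)^((n-k)-(y-k))) = (\<Sum>j=0..n-k. real ((n-k) choose j) * x^j * (1-x)^((n-k)-j))"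
    using assms by (subst sum.atLeastAtMost_shift_0) (auto simp: comp_def)
  also have "\<dots> = 1"
    using binomial_ring[of x "1-x" "n-k"] by (simp add: atLeast0AtMost)
  finally show ?thesis by simp
qed

lemma choose1_real: "real (y choose 1) = real y" by simp
lemma choose2_real: "real (y choose 2) = real y * (real y - 1) / 2"
proof (induction y)
  case 0 then show ?case by simp
next
  case (Suc y)
  have "Suc y choose 2 = y + (y choose 2)"
    by (simp add: numeral_2_eq_2)
  then show ?case using Suc by (simp add: field_simps)
qed
lemma choose3_real: "real (y choose 3) = real y * (real y - 1) * (real y - 2) / 6"
proof (induction y)
  case 0 then show ?case by simp
next
  case (Suc y)
  have "Suc y choose 3 = (y choose 2) + (y choose 3)"
    by (simp add: numeral_3_eq_3 numeral_2_eq_2)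
  then show ?case using Suc choose2_real[of y] by (simp add: field_simps)
qed

lemma bW_mean: assumes "n \<ge> 1" shows "(\<Sum>y\<le>n. real y * binom_W n x y) = real n * x"
  using bW_fact_moment[of 1 n x] assms by simp

lemma bW_m2: assumes "n \<ge> 2" shows "(\<Sum>y\<le>n. real y * (real y - 1) * binom_W n x y) = real n * (real n - 1) * x^2"
proof -
  have "(\<Sum>y\<le>n. real y * (real y - 1) * binom_W n x y) = (\<Sum>y\<le>n. 2 * (real (y choose 2) * binom_W n x y))"
    by (rule sum.cong) (auto simp: choose2_real)
  also have "\<dots> = 2 * (real (n choose 2) * x^2)"
    using bW_fact_moment[of 2 n x] assms by (simp add: sum_distrib_left[symmetric])
  finally show ?thesis by (simp add: choose2_real)
qed

lemma bW_m3: assumes "n \<ge> 3" shows "(\<Sum>y\<le>n. real y * (real y - 1) * (real y - 2) * binom_W n x y) = real n * (real n - 1) * (real n - 2) * x^3"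
proof -
  have "(\<Sum>y\<le>n. real y * (real y - 1) * (real y - 2) * binom_W n x y) = (\<Sum>y\<le>n. 6 * (real (y choose 3) * binom_W n x y))"
    by (rule sum.cong) (auto simp: choose3_real)
  also have "\<dots> = 6 * (real (n choose 3) * x^3)"
    using bW_fact_moment[of 3 n x] assms by (simp add: sum_distrib_left[symmetric])
  finally show ?thesis by (simp add: choose3_real)
qed

lemma bW_central2: assumes "n \<ge> 3"
  shows "(\<Sum>y\<le>n. (real y - real n * x)^2 * binom_W n x y) = real n * x * (1-x)"
proof -
  have "(\<Sum>y\<le>n. (real y - real n * x)^2 * binom_W n x y) =
        (\<Sum>y\<le>n. real y * (real y - 1) * binom_W n x y) + (1 - 2*real n*x) * (\<Sum>y\<le>n. real y * binom_W n x y) + (real n*x)^2 * (\<Sum>y\<le>n. binom_W n x y)"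
    by (simp add: sum_distrib_left sum.distrib[symmetric] power2_eq_square algebra_simps)
  also have "\<dots> = real n * (real n - 1) * x^2 + (1 - 2*real n*x) * (real n * x) + (real n*x)^2 * 1"
    using assms by (simp only: bW_m2 bW_mean bW_sum1)
  also have "\<dots> = real n * x * (1-x)"
    by (simp add: power2_eq_square algebra_simps)
  finally show ?thesis .
qed

lemma bW_central3: assumes "n \<ge> 3"
  shows "(\<Sum>y\<le>n. (real y - real n * x)^3 * binom_W n x y) = real n * x * (1-x) * (1 - 2*x)"
proof -
  let ?m = "real n * x"
  have "(\<Sum>y\<le>n. (real y - ?m)^3 * binom_W n x y) =
        (\<Sum>y\<le>n. real y * (real y - 1) * (real y - 2) * binom_W n x y)
        + (3 - 3*?m) * (\<Sum>y\<le>n. real y * (real y - 1) * binom_W n x y)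
        + (1 - 3*?m + 3*?m^2) * (\<Sum>y\<le>n. real y * binom_W n x y)
        - ?m^3 * (\<Sum>y\<le>n. binom_W n x y)"
    by (simp add: sum_distrib_left sum_subtractf[symmetric] sum.distrib[symmetric] power2_eq_square power3_eq_cube algebra_simps)
  also have "\<dots> = real n * (real n - 1) * (real n - 2) * x^3 + (3 - 3*?m) * (real n * (real n - 1) * x^2)
        + (1 - 3*?m + 3*?m^2) * (real n * x) - ?m^3 * 1"
    using assms by (simp only: bW_m3 bW_m2 bW_mean bW_sum1)
  also have "\<dots> = real n * x * (1-x) * (1 - 2*x)"
    by (simp add: power2_eq_square power3_eq_cube algebra_simps)
  finally show ?thesis .
qed

lemma taylor_r:
  fixes r :: real assumes "r \<ge> 0"
  shows "(r-1)^2/2 - (r-1)^3/6 \<le> r * ln r - r + 1"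
proof (cases "r = 0")
  case True then show ?thesis by (simp add: power3_eq_cube)
next
  case False
  hence r: "r > 0" using assms by simp
  define \<phi> where "\<phi> = (\<lambda>r::real. r * ln r - r + 1 - (r-1)^2/2 + (r-1)^3/6)"
  define \<psi> where "\<psi> = (\<lambda>r::real. ln r - (r-1) + (r-1)^2/2)"
  have dphi: "(\<phi> has_real_derivative \<psi> s) (at s)" if "s > 0" for s
    unfolding \<phi>_def \<psi>_def
    apply (insert that)
    apply (rule derivative_eq_intros refl | simp)+
    apply (simp add: power2_eq_square field_simps)
    done
  have dpsi: "(\<psi> has_real_derivative ((s-1)^2/s)) (at s)" if "s > 0" for s
  proof -
    have "(\<psi> has_real_derivative (1/s - 1 + (s-1))) (at s)"
      unfolding \<psi>_def
      apply (insert that)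
      apply (rule derivative_eq_intros refl | simp)+
      apply (simp add: power2_eq_square field_simps)
      done
    moreover have "1/s - 1 + (s-1) = (s-1)^2/s" using that by (simp add: divide_simps power2_eq_square) (simp add: algebra_simps)
    ultimately show ?thesis by simp
  qed
  have psi1: "\<psi> 1 = 0" unfolding \<psi>_def by simp
  have phi1: "\<phi> 1 = 0" unfolding \<phi>_def by simp
  have "\<phi> r \<ge> 0"
  proof (cases "r \<ge> 1")
    case True
    have "\<phi> 1 \<le> \<phi> r"
    proof (rule DERIV_nonneg_imp_nondecreasing[OF True])
      fix s assume s: "1 \<le> s" "s \<le> r"
      have "\<psi> 1 \<le> \<psi> s"
      proof (rule DERIV_nonneg_imp_nondecreasing[OF s(1)])
        fix u assume u: "1 \<le> u" "u \<le> s"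
        show "\<exists>y. (\<psi> has_real_derivative y) (at u) \<and> 0 \<le> y"
          using dpsi[of u] u by (intro exI[of _ "(u-1)^2/u"]) auto
      qed
      then show "\<exists>y. (\<phi> has_real_derivative y) (at s) \<and> 0 \<le> y"
        using dphi[of s] s psi1 by (intro exI[of _ "\<psi> s"]) auto
    qed
    then show ?thesis using phi1 by simp
  next
    case False
    hence r1: "r \<le> 1" by simp
    have "\<phi> 1 \<le> \<phi> r"
    proof (rule DERIV_nonpos_imp_nonincreasing[OF r1])
      fix s assume s: "r \<le> s" "s \<le> 1"
      have "\<psi> s \<le> \<psi> 1"
      proof (rule DERIV_nonneg_imp_nondecreasing[OF s(2)])
        fix u assume u: "s \<le> u" "u \<le> 1"
        show "\<exists>y. (\<psi> has_real_derivative y) (at u) \<and> 0 \<le> y"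
          using dpsi[of u] u r s by (intro exI[of _ "(u-1)^2/u"]) auto
      qed
      then show "\<exists>y. (\<phi> has_real_derivative y) (at s) \<and> y \<le> 0"
        using dphi[of s] s r psi1 by (intro exI[of _ "\<psi> s"]) auto
    qed
    then show ?thesis using phi1 by simp
  qed
  then show ?thesis unfolding \<phi>_def by simp
qed

lemma taylor_ab:
  fixes a b :: real assumes "a \<ge> 0" "b > 0"
  shows "(a-b)^2/(2*b) - (a-b)^3/(6*b^2) \<le> a * ln (a/b) - a + b"
proof -
  have "(a/b-1)^2/2 - (a/b-1)^3/6 \<le> (a/b) * ln (a/b) - a/b + 1"
    using assms by (intro taylor_r) simp
  hence "b * ((a/b-1)^2/2 - (a/b-1)^3/6) \<le> b * ((a/b) * ln (a/b) - a/b + 1)"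
    using assms by (intro mult_left_mono) auto
  moreover have "b * ((a/b-1)^2/2 - (a/b-1)^3/6) = (a-b)^2/(2*b) - (a-b)^3/(6*b^2)"
    using assms by (simp add: divide_simps power2_eq_square power3_eq_cube)
  moreover have "b * ((a/b) * ln (a/b) - a/b + 1) = a * ln (a/b) - a + b"
    using assms by (simp add: divide_simps algebra_simps)
  ultimately show ?thesis by simp
qed

definition KL :: "nat \<Rightarrow> real \<Rightarrow> nat \<Rightarrow> real" where
  "KL n x y = real y * ln (real y / (real n * x)) + real (n-y) * ln (real (n-y) / (real n * (1-x)))"

lemma EK_lower:
  assumes "n \<ge> 3" "0 < x" "x < 1"
  shows "1/2 - (1-2*x)^2/(6*(real n*x*(1-x))) \<le> (\<Sum>y\<le>n. binom_W n x y * KL n x y)"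
proof -
  define m where "m = real n * x"
  define m' where "m' = real n * (1-x)"
  have m: "m > 0" and m': "m' > 0" unfolding m_def m'_def using assms by auto
  define c2 where "c2 = 1/(2*m) + 1/(2*m')"
  define c3 where "c3 = 1/(6*m'^2) - 1/(6*m^2)"
  have pt: "c2 * (real y - m)^2 + c3 * (real y - m)^3 \<le> KL n x y" if "y \<le> n" for y
  proof -
    have A: "(real y - m)^2/(2*m) - (real y - m)^3/(6*m^2) \<le> real y * ln (real y/m) - real y + m"
      using m by (intro taylor_ab) auto
    have B: "(real (n-y) - m')^2/(2*m') - (real (n-y) - m')^3/(6*m'^2) \<le> real (n-y) * ln (real (n-y)/m') - real (n-y) + m'"
      using m' by (intro taylor_ab) auto
    have e: "real (n-y) - m' = -(real y - m)" unfolding m_def m'_def using that by (simp add: of_nat_diff algebra_simps)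
    have s: "- real y + m - real (n-y) + m' = 0" unfolding m_def m'_def using that by (simp add: of_nat_diff algebra_simps)
    have "c2 * (real y - m)^2 + c3 * (real y - m)^3 =
          ((real y - m)^2/(2*m) - (real y - m)^3/(6*m^2)) + ((real (n-y) - m')^2/(2*m') - (real (n-y) - m')^3/(6*m'^2))"
      unfolding e c2_def c3_def by (simp add: power2_eq_square power3_eq_cube algebra_simps add_divide_distrib diff_divide_distrib)
    also have "\<dots> \<le> (real y * ln (real y/m) - real y + m) + (real (n-y) * ln (real (n-y)/m') - real (n-y) + m')"
      using A B by simp
    also have "\<dots> = KL n x y" unfolding KL_def m_def[symmetric] m'_def[symmetric] using s by simp
    finally show ?thesis .
  qed
  have "(\<Sum>y\<le>n. binom_W n x y * (c2 * (real y - m)^2 + c3 * (real y - m)^3)) \<le> (\<Sum>y\<le>n. binom_W n x y * KL n x y)"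
  proof (rule sum_mono)
    fix y assume "y \<in> {..n}"
    moreover have "binom_W n x y \<ge> 0" unfolding binom_W_def using assms by simp
    ultimately show "binom_W n x y * (c2 * (real y - m)^2 + c3 * (real y - m)^3) \<le> binom_W n x y * KL n x y"
      using pt by (intro mult_left_mono) auto
  qed
  moreover have "(\<Sum>y\<le>n. binom_W n x y * (c2 * (real y - m)^2 + c3 * (real y - m)^3)) =
      c2 * (\<Sum>y\<le>n. (real y - m)^2 * binom_W n x y) + c3 * (\<Sum>y\<le>n. (real y - m)^3 * binom_W n x y)"
    by (simp add: sum_distrib_left sum.distrib algebra_simps)
  moreover have "c2 * (\<Sum>y\<le>n. (real y - m)^2 * binom_W n x y) + c3 * (\<Sum>y\<le>n. (real y - m)^3 * binom_W n x y)
      = c2 * (real n * x * (1-x)) + c3 * (real n * x * (1-x) * (1 - 2*x))"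
    unfolding m_def using bW_central2[OF assms(1)] bW_central3[OF assms(1)] by simp
  moreover have "c2 * (real n * x * (1-x)) + c3 * (real n * x * (1-x) * (1 - 2*x)) = 1/2 - (1-2*x)^2/(6*(real n*x*(1-x)))"
  proof -
    have n: "real n > 0" using assms by simp
    have x: "1 - x > 0" using assms by simp
    show ?thesis unfolding c2_def c3_def m_def m'_def using n x assms(2)
      by (simp add: divide_simps power2_eq_square) (simp add: algebra_simps)
  qed
  ultimately show ?thesis by simp
qed

definition Qd :: "nat \<Rightarrow> real \<Rightarrow> nat \<Rightarrow> real" where
  "Qd n \<epsilon> y = (1-\<epsilon>) * (if 1 \<le> y \<and> y < n then 1/sqrt (real y * (real n - real y)) else 0) / pi
      + (\<epsilon>/4) / (real (min y (n-y)) + 1)^2"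

definition DQ :: "nat \<Rightarrow> (nat \<Rightarrow> real) \<Rightarrow> real \<Rightarrow> real" where
  "DQ n Q x = (\<Sum>y\<le>n. if binom_W n x y = 0 then 0 else binom_W n x y * ln (binom_W n x y / Q y))"

lemma binom_W_nonneg: "0 \<le> x \<Longrightarrow> x \<le> 1 \<Longrightarrow> 0 \<le> binom_W n x y"
  unfolding binom_W_def by simp

lemma binom_W_le1: assumes "0 \<le> x" "x \<le> 1" "y \<le> n" shows "binom_W n x y \<le> 1"
proof -
  have "binom_W n x y \<le> (\<Sum>y\<le>n. binom_W n x y)"
    using assms by (intro member_le_sum) (auto intro: binom_W_nonneg)
  then show ?thesis by (simp add: bW_sum1)
qed

lemma Qd_ge_edge: "0 \<le> \<epsilon> \<Longrightarrow> \<epsilon> \<le> 1 \<Longrightarrow> (\<epsilon>/4) / (real (min y (n-y)) + 1)^2 \<le> Qd n \<epsilon> y"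
  unfolding Qd_def by simp

lemma Qd_ge_int: "0 \<le> \<epsilon> \<Longrightarrow> \<epsilon> \<le> 1 \<Longrightarrow> 1 \<le> y \<Longrightarrow> y < n \<Longrightarrow> (1-\<epsilon>) / (pi * sqrt (real y * (real n - real y))) \<le> Qd n \<epsilon> y"
  unfolding Qd_def by (simp add: mult.commute)

lemma Qd_pos: assumes "0 < \<epsilon>" "\<epsilon> \<le> 1" shows "0 < Qd n \<epsilon> y"
proof -
  have "0 < (\<epsilon>/4) / (real (min y (n-y)) + 1)^2" using assms by simp
  then show ?thesis using Qd_ge_edge[of \<epsilon> y n] assms by linarith
qed

lemma sum_inv_sq_atMost: "(\<Sum>y\<le>N. 1/(real y + 1)^2) \<le> 2 - 1/(real N + 1)"
proof (induction N)
  case 0 then show ?case by simp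
next
  case (Suc N)
  have "(\<Sum>y\<le>Suc N. 1/(real y + 1)^2) = (\<Sum>y\<le>N. 1/(real y + 1)^2) + 1/(real N + 2)^2" by simp
  also have "\<dots> \<le> 2 - 1/(real N + 1) + 1/(real N + 2)^2" using Suc.IH by simp
  also have "\<dots> \<le> 2 - 1/(real N + 2)"
  proof -
    have "1/(real N + 2)^2 \<le> 1/((real N + 1) * (real N + 2))"
      by (intro divide_left_mono) (auto simp: power2_eq_square)
    moreover have "1/((real N + 1) * (real N + 2)) = 1/(real N + 1) - 1/(real N + 2)"
      by (simp add: divide_simps)
    ultimately show ?thesis by simp
  qed
  finally show ?case by (simp add: add.commute)
qed

lemma Qd_sum: assumes "n \<ge> 2" "0 \<le> \<epsilon>" "\<epsilon> \<le> 1" shows "(\<Sum>y\<le>n. Qd n \<epsilon> y) \<le> 1"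
proof -
  have J: "(\<Sum>y\<le>n. (if 1 \<le> y \<and> y < n then 1/sqrt (real y * (real n - real y)) else 0)) \<le> pi"
  proof -
    have "(\<Sum>y\<le>n. (if 1 \<le> y \<and> y < n then 1/sqrt (real y * (real n - real y)) else 0))
        = (\<Sum>y\<in>{1..n-1}. 1/sqrt (real y * (real n - real y)))"
      by (rule sum.mono_neutral_cong_right) auto
    then show ?thesis using sum_recip_sqrt_le_pi[OF assms(1)] by simp
  qed
  have R: "(\<Sum>y\<le>n. 1/(real (min y (n-y)) + 1)^2) \<le> 4"
  proof -
    have "(\<Sum>y\<le>n. 1/(real (min y (n-y)) + 1)^2) \<le> (\<Sum>y\<le>n. 1/(real y + 1)^2 + 1/(real (n-y) + 1)^2)"
    proof (rule sum_mono)
      fix y assume "y \<in> {..n}"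
      show "1/(real (min y (n-y)) + 1)^2 \<le> 1/(real y + 1)^2 + 1/(real (n-y) + 1)^2"
        by (cases "y \<le> n - y") (auto simp: min_def)
    qed
    also have "\<dots> = (\<Sum>y\<le>n. 1/(real y + 1)^2) + (\<Sum>y\<le>n. 1/(real (n-y) + 1)^2)"
      by (simp add: sum.distrib)
    also have "(\<Sum>y\<le>n. 1/(real (n-y) + 1)^2) = (\<Sum>y\<le>n. 1/(real y + 1)^2)"
    proof -
      have "(\<Sum>y\<in>{0..n}. 1/(real y + 1)^2) = (\<Sum>y\<in>{0..n}. 1/(real (n + 0 - y) + 1)^2)"
        by (rule sum.atLeastAtMost_rev)
      then show ?thesis by (simp add: atLeast0AtMost)
    qed
    also have "(\<Sum>y\<le>n. 1/(real y + 1)^2) + (\<Sum>y\<le>n. 1/(real y + 1)^2) \<le> 4"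
    proof -
      have "1/(real n + 1) \<ge> 0" by simp
      then show ?thesis using sum_inv_sq_atMost[of n] by linarith
    qed
    finally show ?thesis .
  qed
  have "(\<Sum>y\<le>n. Qd n \<epsilon> y) = (1-\<epsilon>)/pi * (\<Sum>y\<le>n. (if 1 \<le> y \<and> y < n then 1/sqrt (real y * (real n - real y)) else 0))
        + \<epsilon>/4 * (\<Sum>y\<le>n. 1/(real (min y (n-y)) + 1)^2)"
    unfolding Qd_def by (simp add: sum.distrib sum_distrib_left)
  also have "\<dots> \<le> (1-\<epsilon>)/pi * pi + \<epsilon>/4 * 4"
    using J R assms by (intro add_mono mult_left_mono) auto
  also have "\<dots> = 1" by simp
  finally show ?thesis .
qed

lemma jensen_ln:
  assumes "0 \<le> x" "x \<le> 1" "\<And>y. y \<le> n \<Longrightarrow> f y > 0"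
  shows "(\<Sum>y\<le>n. binom_W n x y * ln (f y)) \<le> ln (\<Sum>y\<le>n. binom_W n x y * f y)"
proof -
  define c where "c = (\<Sum>y\<le>n. binom_W n x y * f y)"
  have "c > 0"
  proof -
    have "(\<Sum>y\<le>n. binom_W n x y * f y) \<ge> (\<Sum>y\<le>n. binom_W n x y * 0)" using assms
      by (intro sum_mono mult_left_mono) (auto intro: binom_W_nonneg less_imp_le)
    moreover have "(\<Sum>y\<le>n. binom_W n x y * f y) \<noteq> 0"
    proof
      assume "(\<Sum>y\<le>n. binom_W n x y * f y) = 0"
      moreover have nn: "\<forall>y\<in>{..n}. 0 \<le> binom_W n x y * f y"
        using binom_W_nonneg[OF assms(1,2)] assms(3) by (meson atMost_iff less_imp_le mult_nonneg_nonneg)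
      ultimately have "\<forall>y\<in>{..n}. binom_W n x y * f y = 0"
        by (subst (asm) sum_nonneg_eq_0_iff) auto
      hence "\<forall>y\<in>{..n}. binom_W n x y = 0" using assms(3) by (metis atMost_iff mult_eq_0_iff order_less_irrefl)
      hence "(\<Sum>y\<le>n. binom_W n x y) = 0" by simp
      then show False by (simp add: bW_sum1)
    qed
    ultimately show ?thesis unfolding c_def by simp
  qed
  have "(\<Sum>y\<le>n. binom_W n x y * ln (f y)) \<le> (\<Sum>y\<le>n. binom_W n x y * (ln c + f y / c - 1))"
  proof (rule sum_mono)
    fix y assume y: "y \<in> {..n}"
    have fy: "f y > 0" using assms y by auto
    have "ln (f y / c) \<le> f y / c - 1" using fy \<open>c > 0\<close> by (intro ln_le_minus_one) auto
    hence "ln (f y) \<le> ln c + f y / c - 1" using fy \<open>c > 0\<close> by (simp add: ln_divide_pos)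
    then show "binom_W n x y * ln (f y) \<le> binom_W n x y * (ln c + f y / c - 1)"
      using assms by (intro mult_left_mono binom_W_nonneg) auto
  qed
  also have "\<dots> = (\<Sum>y\<le>n. (ln c - 1) * binom_W n x y + (binom_W n x y * f y) / c)"
    by (rule sum.cong) (simp_all add: algebra_simps add_divide_distrib)
  also have "\<dots> = (ln c - 1) * (\<Sum>y\<le>n. binom_W n x y) + (\<Sum>y\<le>n. binom_W n x y * f y) / c"
    by (simp add: sum.distrib sum_distrib_left sum_divide_distrib)
  also have "\<dots> = ln c" using \<open>c > 0\<close> unfolding c_def by (simp add: bW_sum1)
  finally show ?thesis unfolding c_def .
qed

lemma caseA:
  assumes "n \<ge> 1" "0 \<le> x" "x \<le> 1" "0 < \<epsilon>" "\<epsilon> \<le> 1"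
  shows "DQ n (Qd n \<epsilon>) x \<le> ln (4/\<epsilon>) + 2 * ln (1 + 2 * (real n * x * (1-x)))"
proof -
  let ?W = "binom_W n x"
  let ?m = "\<lambda>y. real (min y (n-y)) + 1"
  have tm: "(if ?W y = 0 then 0 else ?W y * ln (?W y / Qd n \<epsilon> y)) \<le> ?W y * (ln (4/\<epsilon>) + 2 * ln (?m y))"
    if y: "y \<le> n" for y
  proof (cases "?W y = 0")
    case True then show ?thesis by simp
  next
    case False
    hence Wp: "?W y > 0" using binom_W_nonneg[OF assms(2,3)] by (simp add: less_le)
    have W1: "?W y \<le> 1" using binom_W_le1 assms y by simp
    have Q: "(\<epsilon>/4) / (?m y)^2 \<le> Qd n \<epsilon> y" using Qd_ge_edge assms by simp
    have q0: "(\<epsilon>/4) / (?m y)^2 > 0" using assms by simp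
    have Qp: "Qd n \<epsilon> y > 0" using Qd_pos assms by simp
    have "ln (?W y / Qd n \<epsilon> y) = ln (?W y) - ln (Qd n \<epsilon> y)"
      using Wp Qp by (simp add: ln_div)
    also have "\<dots> \<le> 0 - ln ((\<epsilon>/4) / (?m y)^2)"
      using Wp W1 Q q0 by (intro diff_mono) auto
    also have "\<dots> = ln (4/\<epsilon>) + 2 * ln (?m y)"
    proof -
      have m0: "?m y > 0" by simp
      have "ln ((\<epsilon>/4) / (?m y)^2) = ln (\<epsilon>/4) - ln ((?m y)^2)"
        using m0 assms by (intro ln_divide_pos) auto
      also have "\<dots> = ln \<epsilon> - ln 4 - 2 * ln (?m y)"
        using assms by (simp add: ln_divide_pos ln_realpow)
      finally have "ln ((\<epsilon>/4) / (?m y)^2) = ln \<epsilon> - ln 4 - 2 * ln (?m y)" .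
      moreover have "ln (4/\<epsilon>) = ln 4 - ln \<epsilon>" using assms by (simp add: ln_divide_pos)
      ultimately show ?thesis by simp
    qed
    finally show ?thesis using False Wp by simp
  qed
  have "DQ n (Qd n \<epsilon>) x \<le> (\<Sum>y\<le>n. ?W y * (ln (4/\<epsilon>) + 2 * ln (?m y)))"
    unfolding DQ_def by (rule sum_mono) (use tm in auto)
  also have "\<dots> = ln (4/\<epsilon>) + 2 * (\<Sum>y\<le>n. ?W y * ln (?m y))"
    by (simp add: algebra_simps sum.distrib sum_distrib_left bW_sum1 flip: sum_distrib_right)
  also have "(\<Sum>y\<le>n. ?W y * ln (?m y)) \<le> ln (1 + 2 * (real n * x * (1-x)))"
  proof (cases "x \<le> 1/2")
    case True
    have "(\<Sum>y\<le>n. ?W y * ln (?m y)) \<le> (\<Sum>y\<le>n. ?W y * ln (real y + 1))"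
      by (intro sum_mono mult_left_mono binom_W_nonneg) (use assms in auto)
    also have "\<dots> \<le> ln (\<Sum>y\<le>n. ?W y * (real y + 1))"
      by (rule jensen_ln) (use assms in auto)
    also have "(\<Sum>y\<le>n. ?W y * (real y + 1)) = real n * x + 1"
      using bW_mean[OF assms(1), of x] bW_sum1[of n x]
      by (simp add: algebra_simps sum.distrib)
    also have "ln (real n * x + 1) \<le> ln (1 + 2 * (real n * x * (1-x)))"
    proof -
      have "real n * x * (1 - 2*(1-x)) \<le> 0"
        using True assms by (intro mult_nonneg_nonpos) auto
      hence B: "real n * x \<le> 2 * (real n * x * (1-x))" by (simp add: algebra_simps)
      have nx: "0 \<le> real n * x" using assms by simp
      show ?thesis by (rule ln_mono) (use B nx in linarith)+
    qed
    finally show ?thesis .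
  next
    case False
    have "(\<Sum>y\<le>n. ?W y * ln (?m y)) \<le> (\<Sum>y\<le>n. ?W y * ln (real (n-y) + 1))"
      by (intro sum_mono mult_left_mono binom_W_nonneg) (use assms in auto)
    also have "\<dots> \<le> ln (\<Sum>y\<le>n. ?W y * (real (n-y) + 1))"
      by (rule jensen_ln) (use assms in auto)
    also have "(\<Sum>y\<le>n. ?W y * (real (n-y) + 1)) = real n * (1-x) + 1"
    proof -
      have "(\<Sum>y\<le>n. ?W y * (real (n-y) + 1)) = (\<Sum>y\<le>n. (real n + 1) * ?W y - real y * ?W y)"
        by (rule sum.cong) (auto simp: of_nat_diff algebra_simps)
      also have "\<dots> = (real n + 1) * (\<Sum>y\<le>n. ?W y) - (\<Sum>y\<le>n. real y * ?W y)"
        by (simp add: sum_subtractf sum_distrib_left)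
      also have "\<dots> = real n * (1-x) + 1" using bW_mean[OF assms(1), of x] bW_sum1[of n x]
        by (simp add: algebra_simps)
      finally show ?thesis .
    qed
    also have "ln (real n * (1-x) + 1) \<le> ln (1 + 2 * (real n * x * (1-x)))"
    proof -
      have "real n * (1-x) * (1 - 2*x) \<le> 0"
        using False assms by (intro mult_nonneg_nonpos) auto
      hence B: "real n * (1-x) \<le> 2 * (real n * x * (1-x))" by (simp add: algebra_simps)
      have nx: "0 \<le> real n * (1-x)" using assms by simp
      show ?thesis by (rule ln_mono) (use B nx in linarith)+
    qed
    finally show ?thesis .
  qed
  finally show ?thesis by simp
qed

lemma binom_W_pos: "0 < x \<Longrightarrow> x < 1 \<Longrightarrow> y \<le> n \<Longrightarrow> 0 < binom_W n x y"
  unfolding binom_W_def by simp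

lemma caseB:
  assumes n: "n \<ge> 3" and x: "0 < x" "x < 1" and e: "0 < \<epsilon>" "\<epsilon> < 1"
  shows "DQ n (Qd n \<epsilon>) x \<le> max (ln (real n * pi / 2) / 2 - ln (1-\<epsilon>)) (ln (4/\<epsilon>)) - (\<Sum>y\<le>n. binom_W n x y * KL n x y)"
proof -
  let ?W = "binom_W n x"
  define A where "A = max (ln (real n * pi / 2) / 2 - ln (1-\<epsilon>)) (ln (4/\<epsilon>))"
  have nr: "real n > 0" using n by simp
  have tm: "(if ?W y = 0 then 0 else ?W y * ln (?W y / Qd n \<epsilon> y)) \<le> ?W y * (A - KL n x y)"
    if y: "y \<le> n" for y
  proof -
    have Wp: "?W y > 0" using binom_W_pos x y by simp
    have Qp: "Qd n \<epsilon> y > 0" using Qd_pos e by simp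
    have "ln (?W y / Qd n \<epsilon> y) \<le> A - KL n x y"
    proof -
      have lnWQ: "ln (?W y / Qd n \<epsilon> y) = ln (?W y) - ln (Qd n \<epsilon> y)" using Wp Qp by (simp add: ln_div)
      consider "y = 0" | "y = n" | "1 \<le> y \<and> y < n" using y n by linarith
      then show ?thesis
      proof cases
        case 1
        have W0: "?W y = (1-x)^n" using 1 unfolding binom_W_def by simp
        have K0: "KL n x y = - (real n * ln (1-x))"
          using 1 nr x unfolding KL_def by (simp add: ln_div)
        have lW: "ln (?W y) = real n * ln (1-x)" using W0 x by (simp add: ln_realpow)
        have "\<epsilon>/4 \<le> Qd n \<epsilon> y" using Qd_ge_edge[of \<epsilon> y n] e 1 by simp
        hence "ln (\<epsilon>/4) \<le> ln (Qd n \<epsilon> y)" using e by (intro ln_mono) auto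
        moreover have "ln (\<epsilon>/4) = - ln (4/\<epsilon>)" using e by (simp add: ln_div)
        moreover have "ln (4/\<epsilon>) \<le> A" unfolding A_def by simp
        ultimately show ?thesis using lnWQ lW K0 by linarith
      next
        case 2
        have W0: "?W y = x^n" using 2 unfolding binom_W_def by simp
        have K0: "KL n x y = - (real n * ln x)"
          using 2 nr x unfolding KL_def by (simp add: ln_div)
        have lW: "ln (?W y) = real n * ln x" using W0 x by (simp add: ln_realpow)
        have "\<epsilon>/4 \<le> Qd n \<epsilon> y" using Qd_ge_edge[of \<epsilon> y n] e 2 by simp
        hence "ln (\<epsilon>/4) \<le> ln (Qd n \<epsilon> y)" using e by (intro ln_mono) auto
        moreover have "ln (\<epsilon>/4) = - ln (4/\<epsilon>)" using e by (simp add: ln_div)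
        moreover have "ln (4/\<epsilon>) \<le> A" unfolding A_def by simp
        ultimately show ?thesis using lnWQ lW K0 by linarith
      next
        case 3
        have yr: "real y > 0" "real n - real y > 0" "real (n-y) = real n - real y" using 3 by auto
        have C: "ln (real (n choose y)) \<le> - ln (2*pi)/2 + (real n + 1/2) * ln (real n)
          - (real y + 1/2) * ln (real y) - (real (n-y) + 1/2) * ln (real (n-y))"
          using ln_choose_le 3 by auto
        have Cp: "real (n choose y) > 0" using y by simp
        have lW: "ln (?W y) = ln (real (n choose y)) + real y * ln x + real (n-y) * ln (1-x)"
          unfolding binom_W_def using Cp x by (simp add: ln_mult ln_realpow)
        have K: "KL n x y = real y * (ln (real y) - ln (real n) - ln x) + real (n-y) * (ln (real n - real y) - ln (real n) - ln (1-x))"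
        proof -
          have a1: "ln (real y / (real n * x)) = ln (real y) - ln (real n * x)"
            by (rule ln_divide_pos) (use yr nr x in auto)
          have a2: "ln (real n * x) = ln (real n) + ln x"
            by (rule ln_mult_pos) (use nr x in auto)
          have a3: "ln ((real n - real y) / (real n * (1-x))) = ln (real n - real y) - ln (real n * (1-x))"
            by (rule ln_divide_pos) (use yr nr x in auto)
          have a4: "ln (real n * (1-x)) = ln (real n) + ln (1-x)"
            by (rule ln_mult_pos) (use nr x in auto)
          show ?thesis unfolding KL_def yr(3) unfolding a1 a2 a3 a4 by (simp add: algebra_simps)
        qed
        have qlow: "(1-\<epsilon>) / (pi * sqrt (real y * (real n - real y))) \<le> Qd n \<epsilon> y"
          using Qd_ge_int[of \<epsilon> y n] e 3 by simp
        have qp: "(1-\<epsilon>) / (pi * sqrt (real y * (real n - real y))) > 0" using e yr by simp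
        have lq: "ln ((1-\<epsilon>) / (pi * sqrt (real y * (real n - real y)))) = ln (1-\<epsilon>) - ln pi - (ln (real y) + ln (real n - real y))/2"
          using e yr by (simp add: ln_div ln_mult ln_sqrt)
        have lQ: "ln (1-\<epsilon>) - ln pi - (ln (real y) + ln (real n - real y))/2 \<le> ln (Qd n \<epsilon> y)"
          using ln_mono[OF qlow qp] lq by simp
        have l2pi: "ln (2*pi) = ln 2 + ln pi" by (simp add: ln_mult)
        have lnp: "ln (real n * pi / 2) = ln (real n) + ln pi - ln 2" using nr by (simp add: ln_div ln_mult)
        have Ah: "ln (real n * pi / 2) / 2 - ln (1-\<epsilon>) \<le> A" unfolding A_def by simp
        define ly where "ly = ln (real y)"
        define lny where "lny = ln (real n - real y)"
        define ln' where "ln' = ln (real n)"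
        define lC where "lC = ln (real (n choose y))"
        have S: "ln (?W y) + KL n x y = lC + real y * ly + (real n - real y) * lny - real n * ln'"
          unfolding lW K yr(3) ly_def lny_def ln'_def lC_def by (simp add: algebra_simps)
        have C2: "lC \<le> - ln (2*pi)/2 + real n * ln' + ln'/2 - real y * ly - ly/2 - (real n - real y) * lny - lny/2"
          using C unfolding yr(3) ly_def lny_def ln'_def lC_def by (simp add: algebra_simps)
        have S2: "ln (?W y) + KL n x y \<le> - ln (2*pi)/2 + ln'/2 - ly/2 - lny/2"
          using S C2 by linarith
        have Q2: "ln (1-\<epsilon>) - ln pi - (ly + lny)/2 \<le> ln (Qd n \<epsilon> y)"
          using lQ unfolding ly_def lny_def .
        have P2: "ln (real n * pi / 2) = ln' + ln pi - ln 2" using lnp unfolding ln'_def .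
        show ?thesis using lnWQ S2 Q2 P2 l2pi Ah by argo
      qed
    qed
    then show ?thesis using Wp by (simp add: mult_left_mono)
  qed
  have "DQ n (Qd n \<epsilon>) x \<le> (\<Sum>y\<le>n. ?W y * (A - KL n x y))"
    unfolding DQ_def by (rule sum_mono) (use tm in auto)
  also have "\<dots> = A - (\<Sum>y\<le>n. ?W y * KL n x y)"
  proof -
    have "(\<Sum>y\<le>n. ?W y * (A - KL n x y)) = A * (\<Sum>y\<le>n. ?W y) - (\<Sum>y\<le>n. ?W y * KL n x y)"
      by (simp add: algebra_simps sum_subtractf sum_distrib_left)
    then show ?thesis by (simp add: bW_sum1)
  qed
  finally show ?thesis unfolding A_def .
qed

lemma exp3_ge: "exp (3::real) \<ge> 20"
proof -
  have e: "exp (1::real) \<ge> 2718/1000"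
    using e_approx_32 by (simp add: abs_if split: if_split_asm)
  have "exp (3::real) = exp 1 ^ 3" by (simp flip: exp_of_nat_mult)
  also have "\<dots> \<ge> (2718/1000)^3" using e by (intro power_mono) auto
  moreover have "(20::real) \<le> (2718/1000)^3" by (simp add: power3_eq_cube)
  ultimately show ?thesis by linarith
qed

lemma ln4L: fixes L :: real assumes "L > 0" shows "ln (4*L) \<le> L/5 + 2"
proof -
  have "ln (4*L / exp 3) \<le> 4*L/exp 3 - 1" using assms by (intro ln_le_minus_one) auto
  moreover have "ln (4*L / exp 3) = ln (4*L) - 3" using assms by (simp add: ln_div)
  moreover have "4*L/exp 3 \<le> 4*L/20" using assms exp3_ge by (intro divide_left_mono) auto
  ultimately show ?thesis by simp
qed

lemma N1: fixes L :: real assumes "L \<ge> 2" shows "- ln (1 - 1/L) \<le> 5/L"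
proof -
  have z: "1 - 1/L > 0" using assms by (simp add: field_simps)
  have "ln (1/(1-1/L)) \<le> 1/(1-1/L) - 1" using z by (intro ln_le_minus_one) auto
  moreover have "ln (1/(1-1/L)) = - ln (1-1/L)" using z by (simp add: ln_div)
  moreover have "1/(1-1/L) - 1 = 1/(L-1)" using assms by (simp add: divide_simps)
  moreover have "1/(L-1) \<le> 5/L" using assms by (simp add: divide_simps)
  ultimately show ?thesis by simp
qed

lemma N2: fixes L :: real assumes "L \<ge> 2" shows "ln (4*L) - 1/2 + 5/L \<le> L/2 + 10/L"
proof -
  have "ln (4*L) \<le> L/5 + 2" using ln4L assms by simp
  moreover have "L/5 + 2 - 1/2 + 5/L \<le> L/2 + 10/L"
  proof -
    have "3*L/2 \<le> 3*L^2/10 + 5" using sum_squares_ge_zero[of "L - 5/2" 0]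
      by (simp add: power2_eq_square algebra_simps)
    then show ?thesis using assms by (simp add: divide_simps power2_eq_square) (simp add: algebra_simps)
  qed
  ultimately show ?thesis by simp
qed

lemma N3: fixes L :: real assumes "L \<ge> 2" shows "ln (4*L) + 2 * ln (1 + L/15) \<le> L/2 + 10/L"
proof -
  have "ln (4*L) \<le> L/5 + 2" using ln4L assms by simp
  moreover have "ln (1 + L/15) \<le> L/15" using assms by (intro ln_add_one_self_le_self) auto
  moreover have "L/5 + 2 + 2*(L/15) \<le> L/2 + 10/L"
  proof -
    have "2*L \<le> L^2/6 + 10" using sum_squares_ge_zero[of "L - 6" 0]
      by (simp add: power2_eq_square algebra_simps)
    then show ?thesis using assms by (simp add: divide_simps power2_eq_square) (simp add: algebra_simps)
  qed
  ultimately show ?thesis by simp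
qed

lemma D_bound:
  fixes n :: nat and L :: real
  assumes n: "n \<ge> 3" and L: "L \<ge> 2" and Ln: "ln (real n * pi / 2) = L + 1"
    and x: "0 \<le> x" "x \<le> 1"
  shows "DQ n (Qd n (1/L)) x \<le> L/2 + 10/L"
proof -
  have e: "0 < 1/L" "1/L < 1" "1/L \<le> 1" using L by auto
  have l4: "ln (4/(1/L)) = ln (4*L)" by simp
  define V where "V = real n * x * (1-x)"
  show ?thesis
  proof (cases "V < L/30")
    case True
    have "DQ n (Qd n (1/L)) x \<le> ln (4/(1/L)) + 2 * ln (1 + 2 * V)"
      unfolding V_def using caseA[of n x "1/L"] n x e by simp
    also have "\<dots> \<le> ln (4*L) + 2 * ln (1 + L/15)"
    proof -
      have "V \<ge> 0" unfolding V_def using x by simp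
      then have "ln (1 + 2*V) \<le> ln (1 + L/15)" using True by (intro ln_mono) auto
      then show ?thesis by simp
    qed
    also have "\<dots> \<le> L/2 + 10/L" using N3 L by simp
    finally show ?thesis .
  next
    case False
    hence V: "V \<ge> L/30" by simp
    have Vp: "V > 0" using V L by simp
    have x': "0 < x" "x < 1"
    proof -
      show "0 < x" using Vp x unfolding V_def by (cases "x = 0") auto
      show "x < 1" using Vp x unfolding V_def by (cases "x = 1") auto
    qed
    have "DQ n (Qd n (1/L)) x \<le> max (ln (real n * pi / 2) / 2 - ln (1-1/L)) (ln (4/(1/L))) - (\<Sum>y\<le>n. binom_W n x y * KL n x y)"
      using caseB[OF n x' e(1,2)] .
    also have "\<dots> \<le> max ((L+1)/2 - ln (1-1/L)) (ln (4*L)) - (1/2 - (1-2*x)^2/(6*V))"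
      using EK_lower[OF n x'] unfolding Ln l4 V_def by simp
    also have "\<dots> \<le> max ((L+1)/2 - ln (1-1/L)) (ln (4*L)) - 1/2 + 5/L"
    proof -
      have "(1-2*x)^2 = 1 - 4*(x*(1-x))" by (simp add: power2_eq_square algebra_simps)
      moreover have "x*(1-x) \<ge> 0" using x by simp
      ultimately have "(1-2*x)^2 \<le> 1" by linarith
      hence "(1-2*x)^2/(6*V) \<le> 1/(6*V)" using Vp by (intro divide_right_mono) auto
      also have "\<dots> \<le> 1/(6*(L/30))" using V L by (intro divide_left_mono) auto
      also have "\<dots> = 5/L" using L by simp
      finally show ?thesis by simp
    qed
    also have "\<dots> \<le> L/2 + 10/L"
    proof -
      have h1: "(L+1)/2 - ln (1-1/L) - 1/2 + 5/L \<le> L/2 + 10/L" 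
      proof -
        have d: "10/L = 5/L + 5/L" using L by (simp add: divide_simps)
        have d2: "(L+1)/2 - 1/2 = L/2" by (simp add: divide_simps)
        show ?thesis using N1[OF L] d d2 by linarith
      qed
      have h2: "ln (4*L) - 1/2 + 5/L \<le> L/2 + 10/L" using N2[OF L] .
      show ?thesis unfolding max_def using h1 h2 by auto
    qed
    finally show ?thesis .
  qed
qed

definition gW :: "nat \<Rightarrow> real \<Rightarrow> nat \<Rightarrow> real \<Rightarrow> real" where
  "gW n c y x = (if binom_W n x y = 0 then 0 else binom_W n x y * ln (binom_W n x y / c))"

lemma binom_W_borel: "(\<lambda>x. binom_W n x y) \<in> borel_measurable borel"
  unfolding binom_W_def by measurable

lemma gW_borel: "gW n c y \<in> borel_measurable borel"
  unfolding gW_def[abs_def] using binom_W_borel[of n y] by measurable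

lemma gW_bound:
  assumes "0 \<le> x" "x \<le> 1" "y \<le> n" "c \<ge> 0"
  shows "\<bar>gW n c y x\<bar> \<le> 1 + \<bar>ln c\<bar>"
proof (cases "binom_W n x y = 0 \<or> c = 0")
  case True then show ?thesis unfolding gW_def by auto
next
  case False
  let ?w = "binom_W n x y"
  have w: "0 < ?w" "?w \<le> 1" using False binom_W_nonneg[OF assms(1,2)] binom_W_le1[OF assms(1-3)] by (auto simp: less_le)
  have c: "c > 0" using False assms by simp
  have e: "gW n c y x = ?w * ln ?w - ?w * ln c" unfolding gW_def using w c False by (simp add: ln_div algebra_simps)
  have a: "?w * ln ?w \<le> 0" using w by (simp add: mult_nonneg_nonpos)
  have "ln (1/?w) \<le> 1/?w - 1" using w by (intro ln_le_minus_one) auto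
  hence "- ln ?w \<le> 1/?w - 1" using w by (simp add: ln_div)
  hence "?w * (- ln ?w) \<le> ?w * (1/?w - 1)" using w by (intro mult_left_mono) auto
  hence b: "- (?w * ln ?w) \<le> 1" using w by (simp add: algebra_simps)
  have "\<bar>?w * ln c\<bar> \<le> \<bar>ln c\<bar>" using w by (simp add: abs_mult mult_left_le_one_le)
  then show ?thesis unfolding e using a b by linarith
qed

lemma MI_le:
  assumes M: "M \<in> input_dists"
    and Qp: "\<And>y. y \<le> n \<Longrightarrow> Q y > 0" and Qs: "(\<Sum>y\<le>n. Q y) \<le> 1"
    and Bd: "\<And>x. 0 \<le> x \<Longrightarrow> x \<le> 1 \<Longrightarrow> DQ n Q x \<le> B"
  shows "binom_MI n M \<le> B"
proof -
  have ps: "prob_space M" and sM: "sets M = sets (restrict_space borel {0..1::real})"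
    using M unfolding input_dists_def by auto
  interpret prob_space M by (rule ps)
  have sp: "space M = {0..1}"
    using sets_eq_imp_space_eq[OF sM] by (simp add: space_restrict_space)
  have meas: "f \<in> borel_measurable M" if "f \<in> borel_measurable borel" for f :: "real \<Rightarrow> real"
  proof -
    have "f \<in> borel_measurable (restrict_space borel {0..1})"
      using that by (rule measurable_restrict_space1)
    moreover have eq: "borel_measurable M = borel_measurable (restrict_space borel {0..1::real})"
      by (rule measurable_cong_sets[OF sM refl])
    ultimately show ?thesis by (metis eq)
  qed
  have Wm: "(\<lambda>x. binom_W n x y) \<in> borel_measurable M" for y by (rule meas[OF binom_W_borel])
  have Wi: "integrable M (\<lambda>x. binom_W n x y)" if "y \<le> n" for y
  proof (rule integrable_const_bound[where B=1])
    show "AE x in M. norm (binom_W n x y) \<le> 1"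
      using binom_W_nonneg binom_W_le1 that by (intro AE_I2) (auto simp: sp)
  qed (rule Wm)
  have gi: "integrable M (gW n c y)" if "y \<le> n" "c \<ge> 0" for y c
  proof (rule integrable_const_bound[where B="1 + \<bar>ln c\<bar>"])
    show "AE x in M. norm (gW n c y x) \<le> 1 + \<bar>ln c\<bar>"
      using gW_bound that by (intro AE_I2) (auto simp: sp)
  qed (rule meas[OF gW_borel])
  define out where "out y = integral\<^sup>L M (\<lambda>x. binom_W n x y)" for y
  have out_nn: "out y \<ge> 0" if "y \<le> n" for y
    unfolding out_def by (rule Bochner_Integration.integral_nonneg) (use binom_W_nonneg in \<open>auto simp: sp\<close>)
  have out_sum: "(\<Sum>y\<le>n. out y) = 1"
  proof -
    have "(\<Sum>y\<le>n. out y) = integral\<^sup>L M (\<lambda>x. \<Sum>y\<le>n. binom_W n x y)"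
      unfolding out_def using Bochner_Integration.integral_sum[where f="\<lambda>y x. binom_W n x y" and I="{..n}" and M=M] Wi by simp
    also have "\<dots> = integral\<^sup>L M (\<lambda>x. 1)" by (simp add: bW_sum1)
    also have "\<dots> = 1" by (simp add: prob_space)
    finally show ?thesis .
  qed
  have per: "integral\<^sup>L M (gW n (out y) y) \<le> integral\<^sup>L M (gW n (Q y) y) + (Q y - out y)"
    if y: "y \<le> n" for y
  proof (cases "out y = 0")
    case True
    have nnAE: "AE x in M. 0 \<le> binom_W n x y"
      by (intro AE_I2) (auto simp: sp intro: binom_W_nonneg)
    have "AE x in M. binom_W n x y = 0"
      using integral_nonneg_eq_0_iff_AE[OF Wi[OF y] nnAE] True unfolding out_def by simp
    hence "AE x in M. gW n (out y) y x = gW n (Q y) y x"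
      by (rule AE_mp) (intro AE_I2, simp add: gW_def)
    hence "integral\<^sup>L M (gW n (out y) y) = integral\<^sup>L M (gW n (Q y) y)"
      by (rule integral_cong_AE[OF meas[OF gW_borel] meas[OF gW_borel]])
    then show ?thesis using Qp[OF y] True by simp
  next
    case False
    hence op: "out y > 0" using out_nn[OF y] by simp
    have Qy: "Q y > 0" using Qp[OF y] .
    have pt: "gW n (out y) y x = gW n (Q y) y x + binom_W n x y * ln (Q y / out y)" if x: "x \<in> space M" for x
    proof (cases "binom_W n x y = 0")
      case True then show ?thesis unfolding gW_def by simp
    next
      case False
      hence wp: "binom_W n x y > 0" using binom_W_nonneg[of x n y] x by (auto simp: sp less_le)
      show ?thesis unfolding gW_def using False wp op Qy by (simp add: ln_div algebra_simps)
    qed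
    have "integral\<^sup>L M (gW n (out y) y) = integral\<^sup>L M (\<lambda>x. gW n (Q y) y x + binom_W n x y * ln (Q y / out y))"
      by (rule Bochner_Integration.integral_cong[OF refl]) (use pt in auto)
    also have "\<dots> = integral\<^sup>L M (gW n (Q y) y) + out y * ln (Q y / out y)"
      using gi[OF y, of "Q y"] Wi[OF y] Qy unfolding out_def by simp
    also have "out y * ln (Q y / out y) \<le> out y * (Q y / out y - 1)"
      using op Qy by (intro mult_left_mono ln_le_minus_one) auto
    also have "out y * (Q y / out y - 1) = Q y - out y" using op by (simp add: algebra_simps)
    finally show ?thesis by simp
  qed
  have giQ: "integrable M (gW n (Q y) y)" if "y \<le> n" for y
    using gi[OF that less_imp_le[OF Qp[OF that]]] .
  have "binom_MI n M = integral\<^sup>L M (\<lambda>x. \<Sum>y\<le>n. gW n (out y) y x)"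
    unfolding binom_MI_def gW_def out_def binom_out_def by simp
  also have "\<dots> = (\<Sum>y\<le>n. integral\<^sup>L M (gW n (out y) y))"
    by (rule Bochner_Integration.integral_sum) (use gi out_nn in auto)
  also have "\<dots> \<le> (\<Sum>y\<le>n. integral\<^sup>L M (gW n (Q y) y) + (Q y - out y))"
    by (rule sum_mono) (use per in auto)
  also have "\<dots> = integral\<^sup>L M (\<lambda>x. \<Sum>y\<le>n. gW n (Q y) y x) + ((\<Sum>y\<le>n. Q y) - (\<Sum>y\<le>n. out y))"
    by (subst Bochner_Integration.integral_sum) (use giQ in \<open>auto simp: sum.distrib sum_subtractf\<close>)
  also have "\<dots> \<le> integral\<^sup>L M (\<lambda>x. \<Sum>y\<le>n. gW n (Q y) y x)"
    using Qs out_sum by simp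
  also have "\<dots> \<le> integral\<^sup>L M (\<lambda>x. B)"
  proof (rule integral_mono)
    show "integrable M (\<lambda>x. \<Sum>y\<le>n. gW n (Q y) y x)"
      by (rule Bochner_Integration.integrable_sum) (use giQ in auto)
    show "integrable M (\<lambda>x. B)" by simp
    fix x assume "x \<in> space M"
    then show "(\<Sum>y\<le>n. gW n (Q y) y x) \<le> B" using Bd[of x] unfolding DQ_def gW_def by (auto simp: sp)
  qed
  also have "\<dots> = B" by (simp add: prob_space)
  finally show ?thesis .
qed

lemma rUB_ge: assumes "real n * pi > 2 * exp 1"
  shows "10 / ln (real n * pi / (2 * exp 1)) \<le> r_UB n"
proof -
  define z where "z = (2 * exp 1) / (real n * pi)"
  define t where "t = z powr (1/4)"
  have ep: "0 < 2 * exp (1::real)" by simp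
  have np: "real n * pi > 0" using assms ep by linarith
  have z1: "0 < z" unfolding z_def by (rule divide_pos_pos) (use ep np in auto)
  have z2: "z < 1" unfolding z_def by (subst divide_less_eq_1_pos[OF np]) (use assms in simp)
  note z = z1 z2
  have t: "0 \<le> t" "t \<le> 1" unfolding t_def using z by (auto intro: powr_le1)
  have "ln (1 - 2*t) \<le> 0"
  proof (cases "1 - 2*t > 0")
    case True then show ?thesis using t by simp
  next
    case False
    show ?thesis
    proof (cases "1 - 2*t = 0")
      case True then show ?thesis by simp
    next
      case F2: False
      hence "2*t - 1 > 0" using False by simp
      moreover have "ln (1 - 2*t) = ln (2*t - 1)" using ln_minus[of "2*t - 1"] by simp
      ultimately show ?thesis using t by simp
    qed
  qed
  then show ?thesis unfolding r_UB_def t_def z_def by simp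
qed

theorem theorem2:
  fixes n :: nat
  assumes "n \<ge> 28"
  shows "binom_capacity n \<le> 1/2 * ln (real n * pi / (2 * exp 1)) + r_UB n"
proof -
  define L where "L = ln (real n * pi / (2 * exp 1))"
  have e1: "exp (1::real) < 272/100" by (rule e_less_272)
  have pi3: "pi > 3" by (rule pi_gt3)
  have nr: "real n \<ge> 28" using assms by simp
  have "28 * 3 \<le> real n * pi" by (rule mult_mono) (use nr pi3 in auto)
  hence big: "real n * pi \<ge> 84" by simp
  have "exp (2::real) = exp 1 * exp 1" by (simp flip: exp_add)
  also have "\<dots> \<le> (272/100) * (272/100)" using e1 by (intro mult_mono) auto
  finally have e2: "exp (2::real) \<le> 8" by simp
  have pos: "real n * pi / (2 * exp 1) > 0" using big by simp
  have "exp 2 \<le> real n * pi / (2 * exp 1)"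
  proof -
    have "15 * (2 * exp 1) \<le> real n * pi" using big e1 by linarith
    hence "15 \<le> real n * pi / (2 * exp 1)" by (subst pos_le_divide_eq) auto
    then show ?thesis using e2 by linarith
  qed
  hence L2: "L \<ge> 2" unfolding L_def using pos by (metis ln_exp ln_le_cancel_iff exp_gt_zero)
  have Ln: "ln (real n * pi / 2) = L + 1"
  proof -
    have np: "real n * pi > 0" using big by simp
    have a: "L = ln (real n * pi) - ln (2 * exp 1)" unfolding L_def
      by (rule ln_divide_pos) (use np in auto)
    have b: "ln (2 * exp 1) = ln 2 + (1::real)" using ln_mult_pos[of 2 "exp 1::real"] by simp
    have c: "ln (real n * pi / 2) = ln (real n * pi) - ln 2"
      by (rule ln_divide_pos) (use np in auto)
    show ?thesis using a b c by linarith
  qed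
  have cap: "binom_capacity n \<le> L/2 + 10/L"
    unfolding binom_capacity_def
  proof (rule cSup_least)
    have "return (restrict_space borel {0..1::real}) 0 \<in> input_dists"
      unfolding input_dists_def by (auto intro!: prob_space_return simp: space_restrict_space)
    then show "binom_MI n ` input_dists \<noteq> {}" by blast
  next
    fix v assume "v \<in> binom_MI n ` input_dists"
    then obtain M where M: "M \<in> input_dists" and v: "v = binom_MI n M" by blast
    have "binom_MI n M \<le> L/2 + 10/L"
    proof (rule MI_le[OF M])
      show "\<And>y. y \<le> n \<Longrightarrow> 0 < Qd n (1/L) y" using L2 by (intro Qd_pos) auto
      show "(\<Sum>y\<le>n. Qd n (1/L) y) \<le> 1" using L2 assms by (intro Qd_sum) auto
      show "\<And>x. 0 \<le> x \<Longrightarrow> x \<le> 1 \<Longrightarrow> DQ n (Qd n (1/L)) x \<le> L/2 + 10/L"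
        using D_bound[OF _ L2 Ln] assms by simp
    qed
    then show "v \<le> L/2 + 10/L" using v by simp
  qed
  have "10/L \<le> r_UB n" unfolding L_def
  proof (rule rUB_ge)
    show "real n * pi > 2 * exp 1" using big e1 by linarith
  qed
  then show ?thesis using cap unfolding L_def by simp
qed

end
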